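(* Let $G$ be a directed acyclic graph with $n$ vertices labelled $v_1,\ldots,v_n$ in a topological order, with real edge lengths, let $\varepsilon>0$, $q=(1+\varepsilon)^{1/(n+1)}$, and let $\tau,\tau'$ be the functions defined in the context. Given a real $L$, let $k$ be an integer such that $\tau'(v_n,q^k)\le L<\tau'(v_n,q^{k+1})$ and let $a$ be a non-negative integer such that $\tau(v_n,a)\le L<\tau(v_n,a+1)$. Then $$(1+\varepsilon)^{-1}\le \frac{a}{q^k}\le 1+\varepsilon.$$
   Context: For a vertex $v_i$ and a real number $x\ge 0$, $\tau(v_i,x)$ is the infimum of all real $L'$ such that there are at least $x$ directed paths from $v_1$ to $v_i$ of length (sum of edge lengths) at most $L'$, with $\inf\emptyset=\infty$; the trivial path from $v_1$ to itself has length $0$. For a vertex $v_i$ with $i>1$, let $p_1,\ldots,p_d$ be the tails of the edges entering $v_i$ and $l_1,\ldots,l_d$ the lengths of these edges. The function $\tau'$ is defined on pairs $(v_i,y)$ with $y=0$ or $y=q^j$ for an integer $j$ by: $\tau'(v_1,0)=-\infty$, $\tau'(v_1,y)=0$ for $0<y\le 1$, $\tau'(v_1,y)=\infty$ for $y>1$, and for $i>1$, $$\tau'(v_i,q^j)=\min_{\substack{\alpha_1,\ldots,\alpha_d\ge 0\\ \sum_s\alpha_s=1}}\ \max_{s}\Big(\tau'\big(p_s,q^{\lfloor j+\log_q\alpha_s\rfloor}\big)+l_s\Big),$$ where $q^{\lfloor j+\log_q\alpha_s\rfloor}$ is interpreted as $0$ when $\alpha_s=0$, and $\tau'(v_i,0)=-\infty$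 for every $i$. *)

theory Defs
  imports Complex_Main "HOL-Library.Extended_Real"
begin

(* Vertices are the naturals 1..n (v_i = i), in topological order. *)

definition dag :: "nat \<Rightarrow> (nat \<times> nat) set \<Rightarrow> bool" where
  "dag n E \<longleftrightarrow> (\<forall>(i,j)\<in>E. 1 \<le> i \<and> i < j \<and> j \<le> n)"

definition paths :: "(nat \<times> nat) set \<Rightarrow> nat \<Rightarrow> nat list set" where
  "paths E i = {xs. xs \<noteq> [] \<and> hd xs = 1 \<and> last xs = i \<and>
                    (\<forall>k. Suc k < length xs \<longrightarrow> (xs ! k, xs ! Suc k) \<in> E)}"

definition path_len :: "(nat \<Rightarrow> nat \<Rightarrow> real) \<Rightarrow> nat list \<Rightarrow> real" where
  "path_len l xs = (\<Sum>k<length xs - 1. l (xs ! k) (xs ! Suc k))"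

definition tau :: "(nat \<times> nat) set \<Rightarrow> (nat \<Rightarrow> nat \<Rightarrow> real) \<Rightarrow> nat \<Rightarrow> real \<Rightarrow> ereal" where
  "tau E l i x = Inf {ereal L' | L'. x \<le> real (card {p \<in> paths E i. path_len l p \<le> L'})}"

(* Second argument of tau': None encodes y = 0, Some j encodes y = q^j. *)
definition tau'_arg :: "real \<Rightarrow> int \<Rightarrow> real \<Rightarrow> int option" where
  "tau'_arg q j \<alpha> = (if \<alpha> = 0 then None else Some \<lfloor>real_of_int j + log q \<alpha>\<rfloor>)"

(* tau'_upto E l q k gives the correct values of tau' on vertices 1..k+1 *)
primrec tau'_upto :: "(nat \<times> nat) set \<Rightarrow> (nat \<Rightarrow> nat \<Rightarrow> real) \<Rightarrow> real \<Rightarrow> nat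
                      \<Rightarrow> nat \<Rightarrow> int option \<Rightarrow> ereal" where
  "tau'_upto E l q 0 = (\<lambda>i y. case y of None \<Rightarrow> -\<infinity>
                         | Some j \<Rightarrow> (if q powi j \<le> 1 then 0 else \<infinity>))"
| "tau'_upto E l q (Suc k) =
     (let f = tau'_upto E l q k; i = Suc (Suc k); P = {p. (p, i) \<in> E} in
      f(i := (\<lambda>y. case y of None \<Rightarrow> -\<infinity>
               | Some j \<Rightarrow>
                  Inf {(SUP p\<in>P. f p (tau'_arg q j (\<alpha> p)) + ereal (l p i)) | \<alpha>.
                        (\<forall>p\<in>P. 0 \<le> \<alpha> p) \<and> (\<Sum>p\<in>P. \<alpha> p) = 1})))"

definition tau' :: "(nat \<times> nat) set \<Rightarrow> (nat \<Rightarrow> nat \<Rightarrow> real) \<Rightarrow> real \<Rightarrow> nat \<Rightarrow> int option \<Rightarrow> ereal" where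
  "tau' E l q i y = tau'_upto E l q (i - 1) i y"

end

theory Submission
  imports Defs
begin


lemma paths_decomp:
  assumes "dag n E" "i \<noteq> 1"
  shows "paths E i = (\<Union>p\<in>{p. (p,i)\<in>E}. (\<lambda>xs. xs @ [i]) ` paths E p)"
proof
  show "paths E i \<subseteq> (\<Union>p\<in>{p. (p,i)\<in>E}. (\<lambda>xs. xs @ [i]) ` paths E p)"
  proof
    fix ys assume ys: "ys \<in> paths E i"
    hence ne: "ys \<noteq> []" and h: "hd ys = 1" and la: "last ys = i"
      and ed: "\<And>k. Suc k < length ys \<Longrightarrow> (ys ! k, ys ! Suc k) \<in> E"
      by (auto simp: paths_def)
    have len: "length ys \<ge> 2"
    proof (rule ccontr)
      assume "\<not> ?thesis"
      then have "length ys = 1" using ne by (cases ys) (auto simp: Suc_le_eq)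
      then obtain x where "ys = [x]" by (cases ys) auto
      thus False using h la assms(2) by simp
    qed
    define xs where "xs = butlast ys"
    have ysx: "ys = xs @ [i]" using ne la by (metis append_butlast_last_id xs_def)
    have lxs: "length xs = length ys - 1" by (simp add: xs_def)
    have xne: "xs \<noteq> []" using len lxs by auto
    define p where "p = last xs"
    have "(ys ! (length ys - 2), ys ! Suc (length ys - 2)) \<in> E" using ed len by simp
    moreover have "ys ! (length ys - 2) = p"
    proof -
      have e: "length ys - 2 = length xs - 1" using lxs by simp
      have "length xs - 1 < length xs" using xne by simp
      then have "(xs @ [i]) ! (length xs - 1) = xs ! (length xs - 1)" by (simp add: nth_append)
      then show ?thesis using xne by (simp add: e p_def last_conv_nth flip: ysx)
    qed
    moreover have "ys ! Suc (length ys - 2) = i"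
    proof -
      have "Suc (length ys - 2) = length ys - 1" using len by arith
      then show ?thesis using la ne by (simp add: last_conv_nth)
    qed
    ultimately have pe: "(p, i) \<in> E" by simp
    have "xs \<in> paths E p"
      unfolding paths_def
    proof (intro CollectI conjI allI impI)
      show "xs \<noteq> []" by fact
      show "hd xs = 1" using h xne ysx by simp
      show "last xs = p" by (simp add: p_def)
      fix k assume "Suc k < length xs"
      then show "(xs ! k, xs ! Suc k) \<in> E" using ed[of k] by (simp add: ysx nth_append)
    qed
    then show "ys \<in> (\<Union>p\<in>{p. (p,i)\<in>E}. (\<lambda>xs. xs @ [i]) ` paths E p)"
      using pe ysx by blast
  qed
next
  show "(\<Union>p\<in>{p. (p,i)\<in>E}. (\<lambda>xs. xs @ [i]) ` paths E p) \<subseteq> paths E i"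
  proof clarify
    fix p xs assume pe: "(p,i) \<in> E" and xs: "xs \<in> paths E p"
    hence ne: "xs \<noteq> []" and h: "hd xs = 1" and la: "last xs = p"
      and ed: "\<And>k. Suc k < length xs \<Longrightarrow> (xs ! k, xs ! Suc k) \<in> E"
      by (auto simp: paths_def)
    show "xs @ [i] \<in> paths E i"
      unfolding paths_def
    proof (intro CollectI conjI allI impI)
      show "xs @ [i] \<noteq> []" by simp
      show "hd (xs @ [i]) = 1" using ne h by simp
      show "last (xs @ [i]) = i" by simp
      fix k assume k: "Suc k < length (xs @ [i])"
      show "((xs @ [i]) ! k, (xs @ [i]) ! Suc k) \<in> E"
      proof (cases "Suc k < length xs")
        case True then show ?thesis using ed[of k] by (simp add: nth_append)
      next
        case False
        then have "Suc k = length xs" using k by simp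
        then have "xs ! k = p" using la ne by (metis diff_Suc_1 last_conv_nth)
        then show ?thesis using pe \<open>Suc k = length xs\<close> by (simp add: nth_append)
      qed
    qed
  qed
qed

lemma paths_1: "dag n E \<Longrightarrow> paths E 1 = {[1]}"
proof -
  assume d: "dag n E"
  have "xs = [1]" if "xs \<in> paths E 1" for xs
  proof (rule ccontr)
    assume nx: "xs \<noteq> [1]"
    from that have ne: "xs \<noteq> []" and h: "hd xs = 1" and la: "last xs = 1"
      and ed: "\<And>k. Suc k < length xs \<Longrightarrow> (xs ! k, xs ! Suc k) \<in> E"
      by (auto simp: paths_def)
    have "length xs \<ge> 2"
    proof (rule ccontr)
      assume "\<not> ?thesis"
      then have "length xs = 1" using ne by (cases xs) (auto simp: Suc_le_eq)
      then obtain x where "xs = [x]" by (cases xs) auto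
      thus False using h nx by simp
    qed
    then have "(xs ! (length xs - 2), xs ! Suc (length xs - 2)) \<in> E" using ed by simp
    moreover have "xs ! Suc (length xs - 2) = 1"
    proof -
      have "Suc (length xs - 2) = length xs - 1" using \<open>length xs \<ge> 2\<close> by arith
      then show ?thesis using la ne by (simp add: last_conv_nth)
    qed
    ultimately show False using d unfolding dag_def by fastforce
  qed
  moreover have "[1] \<in> paths E 1" by (simp add: paths_def)
  ultimately show ?thesis by blast
qed

lemma path_len_snoc: "xs \<noteq> [] \<Longrightarrow> path_len l (xs @ [i]) = path_len l xs + l (last xs) i"
proof -
  assume "xs \<noteq> []"
  then obtain m where m: "length xs = Suc m" by (cases xs) auto
  have "path_len l (xs @ [i]) = (\<Sum>k<Suc m. l ((xs@[i]) ! k) ((xs@[i]) ! Suc k))"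
    by (simp add: path_len_def m)
  also have "\<dots> = (\<Sum>k<m. l (xs ! k) (xs ! Suc k)) + l (xs ! m) i"
    by (simp add: nth_append m)
  also have "xs ! m = last xs" using m \<open>xs \<noteq> []\<close> by (simp add: last_conv_nth)
  finally show ?thesis by (simp add: path_len_def m)
qed

lemma paths_finite: "dag n E \<Longrightarrow> finite (paths E i)"
proof (induction i rule: less_induct)
  case (less i)
  show ?case
  proof (cases "i = 1")
    case True then show ?thesis using paths_1[OF less.prems] by simp
  next
    case False
    have "finite {p. (p,i)\<in>E}"
      by (rule finite_subset[of _ "{..<i}"]) (use less.prems in \<open>auto simp: dag_def\<close>)
    moreover have "p < i" if "(p,i)\<in>E" for p using less.prems that by (auto simp: dag_def)
    ultimately show ?thesis using paths_decomp[OF less.prems False] less.IH less.prems by auto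
  qed
qed



definition cnt :: "(nat \<times> nat) set \<Rightarrow> (nat \<Rightarrow> nat \<Rightarrow> real) \<Rightarrow> nat \<Rightarrow> real \<Rightarrow> nat" where
  "cnt E l i L = card {p \<in> paths E i. path_len l p \<le> L}"

lemma cnt_1: "dag n E \<Longrightarrow> cnt E l 1 L = (if 0 \<le> L then 1 else 0)"
proof -
  assume "dag n E"
  then have "paths E 1 = {[1]}" by (rule paths_1)
  moreover have "path_len l [1] = 0" by (simp add: path_len_def)
  ultimately have "{p \<in> paths E 1. path_len l p \<le> L} = (if 0 \<le> L then {[1]} else {})"
  proof (cases "0 \<le> L")
    case True
    show ?thesis
    proof (intro set_eqI iffI)
      fix x assume "x \<in> {p \<in> paths E 1. path_len l p \<le> L}"
      then have "x = [1]" using \<open>paths E 1 = {[1]}\<close> by blast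
      then show "x \<in> (if 0 \<le> L then {[1]} else {})" using True by simp
    next
      fix x :: "nat list" assume "x \<in> (if 0 \<le> L then {[1]} else {})"
      then have "x = [1]" using True by simp
      then show "x \<in> {p \<in> paths E 1. path_len l p \<le> L}"
        using \<open>paths E 1 = {[1]}\<close> \<open>path_len l [1] = 0\<close> True by simp
    qed
  next
    case False
    have "x \<notin> {p \<in> paths E 1. path_len l p \<le> L}" for x
    proof
      assume "x \<in> {p \<in> paths E 1. path_len l p \<le> L}"
      then have "x = [1]" "path_len l x \<le> L" using \<open>paths E 1 = {[1]}\<close> by blast+
      then show False using False \<open>path_len l [1] = 0\<close> by simp
    qed
    then show ?thesis using False by auto
  qed
  then show ?thesis by (simp add: cnt_def)
qed

lemma cnt_mono: "dag n E \<Longrightarrow> L \<le> L' \<Longrightarrow> cnt E l i L \<le> cnt E l i L'"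
  unfolding cnt_def by (rule card_mono) (use paths_finite[of n E i] in auto)

lemma cnt_decomp:
  assumes d: "dag n E" and i: "i \<noteq> 1"
  shows "cnt E l i L = (\<Sum>p\<in>{p. (p,i)\<in>E}. cnt E l p (L - l p i))"
proof -
  let ?P = "{p. (p,i)\<in>E}"
  have fP: "finite ?P"
    by (rule finite_subset[of _ "{..<i}"]) (use d in \<open>auto simp: dag_def\<close>)
  have eq: "{ys \<in> paths E i. path_len l ys \<le> L} =
     (\<Union>p\<in>?P. (\<lambda>xs. xs @ [i]) ` {xs \<in> paths E p. path_len l xs \<le> L - l p i})"
  proof -
    have "path_len l (xs @ [i]) = path_len l xs + l p i" if "xs \<in> paths E p" for xs p
      using that by (simp add: path_len_snoc paths_def)
    then show ?thesis using paths_decomp[OF d i] by (auto simp: algebra_simps)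
  qed
  have "card (\<Union>p\<in>?P. (\<lambda>xs. xs @ [i]) ` {xs \<in> paths E p. path_len l xs \<le> L - l p i})
      = (\<Sum>p\<in>?P. card ((\<lambda>xs. xs @ [i]) ` {xs \<in> paths E p. path_len l xs \<le> L - l p i}))"
  proof (rule card_UN_disjoint[OF fP])
    show "\<forall>p\<in>?P. finite ((\<lambda>xs. xs @ [i]) ` {xs \<in> paths E p. path_len l xs \<le> L - l p i})"
      using paths_finite[OF d] by auto
    show "\<forall>p\<in>?P. \<forall>p'\<in>?P. p \<noteq> p' \<longrightarrow>
       (\<lambda>xs. xs @ [i]) ` {xs \<in> paths E p. path_len l xs \<le> L - l p i} \<inter>
       (\<lambda>xs. xs @ [i]) ` {xs \<in> paths E p'. path_len l xs \<le> L - l p' i} = {}"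
      by (auto simp: paths_def)
  qed
  also have "\<dots> = (\<Sum>p\<in>?P. cnt E l p (L - l p i))"
    by (rule sum.cong) (auto simp: cnt_def card_image inj_on_def)
  finally show ?thesis by (simp add: cnt_def eq)
qed

lemma cnt_rcont:
  assumes d: "dag n E"
  shows "\<exists>\<delta>>0. cnt E l i (L + \<delta>) \<le> cnt E l i L"
proof -
  let ?S = "path_len l ` {p \<in> paths E i. path_len l p > L}"
  have fS: "finite ?S" using paths_finite[OF d] by auto
  show ?thesis
  proof (cases "?S = {}")
    case True
    have "{p \<in> paths E i. path_len l p \<le> L + 1} \<subseteq> {p \<in> paths E i. path_len l p \<le> L}"
      using True by force
    then show ?thesis unfolding cnt_def
      by (intro exI[of _ 1]) (auto intro!: card_mono paths_finite[OF d])
  next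
    case False
    define \<delta> where "\<delta> = (Min ?S - L) / 2"
    have "Min ?S \<in> ?S" using Min_in[OF fS False] .
    then have "Min ?S > L" by auto
    then have dp: "\<delta> > 0" by (simp add: \<delta>_def)
    have "{p \<in> paths E i. path_len l p \<le> L + \<delta>} \<subseteq> {p \<in> paths E i. path_len l p \<le> L}"
    proof clarify
      fix p assume p: "p \<in> paths E i" "path_len l p \<le> L + \<delta>"
      show "path_len l p \<le> L"
      proof (rule ccontr)
        assume "\<not> ?thesis"
        then have "path_len l p \<in> ?S" using p by auto
        then have "Min ?S \<le> path_len l p" using fS by simp
        have key: "False" if "m \<le> x" "x \<le> L + (m - L) / 2" "L < m" for m x :: real using that by (simp add: field_simps)
        show False by (rule key[OF \<open>Min ?S \<le> path_len l p\<close> p(2)[unfolded \<delta>_def] \<open>Min ?S > L\<close>])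
      qed
    qed
    then show ?thesis unfolding cnt_def using dp
      by (intro exI[of _ \<delta>]) (auto intro!: card_mono paths_finite[OF d])
  qed
qed

lemma cnt_rcont2:
  assumes d: "dag n E" and h: "\<And>\<delta>. \<delta> > 0 \<Longrightarrow> X \<le> real (cnt E l i (L + \<delta>))"
  shows "X \<le> real (cnt E l i L)"
proof -
  obtain \<delta> where "\<delta> > 0" "cnt E l i (L + \<delta>) \<le> cnt E l i L" using cnt_rcont[OF d] by blast
  then show ?thesis using h[of \<delta>] by linarith
qed

lemma tau_le:
  assumes d: "dag n E" and t: "tau E l i x \<le> ereal L"
  shows "x \<le> real (cnt E l i L)"
proof (rule ccontr)
  assume nx: "\<not> ?thesis"
  obtain \<delta> where dp: "\<delta> > 0" and c: "cnt E l i (L + \<delta>) \<le> cnt E l i L" using cnt_rcont[OF d] by blast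
  have "ereal (L + \<delta>) \<le> tau E l i x" unfolding tau_def
  proof (rule Inf_greatest, clarify)
    fix L' assume "x \<le> real (card {p \<in> paths E i. path_len l p \<le> L'})"
    then have x: "x \<le> real (cnt E l i L')" by (simp add: cnt_def)
    show "ereal (L + \<delta>) \<le> ereal L'"
    proof (rule ccontr)
      assume "\<not> ?thesis"
      then have "L' \<le> L + \<delta>" by simp
      then have "cnt E l i L' \<le> cnt E l i L" using cnt_mono[OF d] c by (meson order_trans)
      then show False using x nx by linarith
    qed
  qed
  then have "ereal (L + \<delta>) \<le> ereal L" using t by (rule order_trans)
  then show False using dp by simp
qed

lemma le_tau:
  assumes "x \<le> real (cnt E l i L)"
  shows "tau E l i x \<le> ereal L"
  unfolding tau_def using assms by (intro Inf_lower) (auto simp: cnt_def)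



lemma tau'_upto_None: "tau'_upto E l q m i None = -\<infinity>"
  by (induction m arbitrary: i) (auto simp: Let_def)

lemma tau'_None: "tau' E l q i None = -\<infinity>"
  by (simp add: tau'_def tau'_upto_None)

lemma tau'_upto_stable: "p \<le> Suc m \<Longrightarrow> tau'_upto E l q m p = tau' E l q p"
proof (induction m arbitrary: p)
  case 0
  then show ?case by (cases p) (auto simp: tau'_def)
next
  case (Suc m)
  show ?case
  proof (cases "p = Suc (Suc m)")
    case True
    then show ?thesis by (simp add: tau'_def)
  next
    case False
    then have "p \<le> Suc m" using Suc.prems by simp
    then show ?thesis using False Suc.IH[of p] by (simp add: Let_def)
  qed
qed

lemma tau'_1: "tau' E l q 1 (Some j) = (if q powi j \<le> 1 then 0 else \<infinity>)"
  by (simp add: tau'_def)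

lemma tau'_rec:
  assumes d: "dag n E" and i: "2 \<le> i"
  shows "tau' E l q i (Some j) = Inf {(SUP p\<in>{p. (p,i)\<in>E}. tau' E l q p (tau'_arg q j (\<alpha> p)) + ereal (l p i)) | \<alpha>.
           (\<forall>p\<in>{p. (p,i)\<in>E}. 0 \<le> \<alpha> p) \<and> (\<Sum>p\<in>{p. (p,i)\<in>E}. \<alpha> p) = 1}"
proof -
  obtain k where k: "i = Suc (Suc k)" using i by (metis add_2_eq_Suc le_Suc_ex)
  have st: "tau'_upto E l q k p = tau' E l q p" if "(p,i) \<in> E" for p
    using that d k by (intro tau'_upto_stable) (auto simp: dag_def)
  have "tau' E l q i (Some j) = Inf {(SUP p\<in>{p. (p,i)\<in>E}. tau'_upto E l q k p (tau'_arg q j (\<alpha> p)) + ereal (l p i)) | \<alpha>.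
           (\<forall>p\<in>{p. (p,i)\<in>E}. 0 \<le> \<alpha> p) \<and> (\<Sum>p\<in>{p. (p,i)\<in>E}. \<alpha> p) = 1}"
    by (simp add: tau'_def k Let_def)
  also have "\<dots> = Inf {(SUP p\<in>{p. (p,i)\<in>E}. tau' E l q p (tau'_arg q j (\<alpha> p)) + ereal (l p i)) | \<alpha>.
           (\<forall>p\<in>{p. (p,i)\<in>E}. 0 \<le> \<alpha> p) \<and> (\<Sum>p\<in>{p. (p,i)\<in>E}. \<alpha> p) = 1}"
  proof -
    have "(SUP p\<in>{p. (p,i)\<in>E}. tau'_upto E l q k p (tau'_arg q j (\<alpha> p)) + ereal (l p i))
        = (SUP p\<in>{p. (p,i)\<in>E}. tau' E l q p (tau'_arg q j (\<alpha> p)) + ereal (l p i))" for \<alpha>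
      by (rule SUP_cong) (simp_all add: st)
    then show ?thesis by simp
  qed
  finally show ?thesis .
qed



lemma pw: "1 < (q::real) \<Longrightarrow> q powi m = q powr (real_of_int m)"
  by (simp add: powr_real_of_int')

lemma arg_pos: "0 < \<alpha> \<Longrightarrow> tau'_arg q j \<alpha> = Some \<lfloor>real_of_int j + log q \<alpha>\<rfloor>"
  by (simp add: tau'_arg_def)

lemma up:
  assumes d: "dag n E" and q: "1 < q"
  shows "1 \<le> i \<Longrightarrow> q powi j \<le> real (cnt E l i L) \<Longrightarrow> tau' E l q i (Some j) \<le> ereal L"
proof (induction i arbitrary: j L rule: less_induct)
  case (less i)
  have qj: "q powi j > 0" using q by simp
  show ?case
  proof (cases "i = 1")
    case True
    have "cnt E l 1 L \<noteq> 0" using less.prems qj True by auto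
    then have "0 \<le> L" "cnt E l 1 L = 1" using cnt_1[OF d, of l L] by (auto split: if_splits)
    then have "q powi j \<le> 1" using less.prems True by simp
    then show ?thesis using True \<open>0 \<le> L\<close> tau'_1[of E l q j] by simp
  next
    case False
    then have i2: "2 \<le> i" using less.prems by simp
    define P where "P = {p. (p,i)\<in>E}"
    define c where "c p = real (cnt E l p (L - l p i))" for p
    define C where "C = real (cnt E l i L)"
    have Cs: "C = (\<Sum>p\<in>P. c p)" unfolding C_def c_def P_def
      using cnt_decomp[OF d False, of l L] by simp
    have Cp: "C > 0" using less.prems qj unfolding C_def by linarith
    have cnn: "c p \<ge> 0" for p by (simp add: c_def)
    define \<alpha> where "\<alpha> p = c p / C" for p
    have a0: "\<forall>p\<in>P. 0 \<le> \<alpha> p" using Cp cnn by (simp add: \<alpha>_def)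
    have a1: "(\<Sum>p\<in>P. \<alpha> p) = 1" using Cp Cs by (simp add: \<alpha>_def flip: sum_divide_distrib)
    have "(SUP p\<in>P. tau' E l q p (tau'_arg q j (\<alpha> p)) + ereal (l p i)) \<le> ereal L"
    proof (rule SUP_least)
      fix p assume pP: "p \<in> P"
      then have p1: "1 \<le> p" "p < i" using d by (auto simp: P_def dag_def)
      show "tau' E l q p (tau'_arg q j (\<alpha> p)) + ereal (l p i) \<le> ereal L"
      proof (cases "c p = 0")
        case True
        then show ?thesis by (simp add: \<alpha>_def tau'_arg_def tau'_None)
      next
        case False
        then have ap: "\<alpha> p > 0" using cnn[of p] Cp by (simp add: \<alpha>_def)
        define m where "m = \<lfloor>real_of_int j + log q (\<alpha> p)\<rfloor>"
        have "q powi m = q powr (real_of_int m)" using q by (rule pw)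
        also have "\<dots> \<le> q powr (real_of_int j + log q (\<alpha> p))"
          using q by (intro powr_mono) (auto simp: m_def)
        also have "\<dots> = q powi j * \<alpha> p"
          using q ap by (simp add: powr_add pw)
        also have "\<dots> = q powi j * c p / C" by (simp add: \<alpha>_def)
        also have "\<dots> \<le> C * c p / C"
          using less.prems cnn[of p] Cp by (intro divide_right_mono mult_right_mono) (auto simp: C_def)
        also have "\<dots> = c p" using Cp by simp
        finally have "q powi m \<le> real (cnt E l p (L - l p i))" by (simp add: c_def)
        then have "tau' E l q p (Some m) \<le> ereal (L - l p i)"
          using less.IH[OF p1(2) p1(1)] by blast
        then have "tau' E l q p (Some m) + ereal (l p i) \<le> ereal (L - l p i) + ereal (l p i)"
          by (rule add_right_mono)
        then show ?thesis using ap by (simp add: arg_pos m_def)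
      qed
    qed
    moreover have "(SUP p\<in>P. tau' E l q p (tau'_arg q j (\<alpha> p)) + ereal (l p i)) \<in>
       {(SUP p\<in>{p. (p,i)\<in>E}. tau' E l q p (tau'_arg q j (\<alpha> p)) + ereal (l p i)) | \<alpha>.
           (\<forall>p\<in>{p. (p,i)\<in>E}. 0 \<le> \<alpha> p) \<and> (\<Sum>p\<in>{p. (p,i)\<in>E}. \<alpha> p) = 1}"
      using a0 a1 unfolding P_def by blast
    ultimately show ?thesis unfolding tau'_rec[OF d i2] by (rule Inf_lower2[rotated])
  qed
qed


lemma low:
  assumes d: "dag n E" and q: "1 < q"
  shows "1 \<le> i \<Longrightarrow> tau' E l q i (Some j) \<le> ereal L \<Longrightarrow> q powi (j - int i + 1) \<le> real (cnt E l i L)"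
proof (induction i arbitrary: j L rule: less_induct)
  case (less i)
  show ?case
  proof (cases "i = 1")
    case True
    have t: "(if q powi j \<le> 1 then 0 else \<infinity>) \<le> ereal L"
      using less.prems True tau'_1[of E l q j] by simp
    then have "q powi j \<le> 1" by (auto split: if_splits)
    moreover have "0 \<le> L" using t \<open>q powi j \<le> 1\<close> by simp
    ultimately show ?thesis using True cnt_1[OF d, of l L] by simp
  next
    case False
    then have i2: "2 \<le> i" using less.prems by simp
    define P where "P = {p. (p,i)\<in>E}"
    define X where "X = q powi (j - int i + 1)"
    have Xp: "X > 0" using q by (simp add: X_def)
    show ?thesis unfolding X_def[symmetric]
    proof (rule cnt_rcont2[OF d])
      fix \<delta> :: real assume dp: "\<delta> > 0"
      have "tau' E l q i (Some j) < ereal (L + \<delta>)"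
      proof -
        have "ereal L < ereal (L + \<delta>)" using dp by simp
        then show ?thesis using less.prems(2) by (rule le_less_trans[rotated])
      qed
      then obtain \<alpha> where a0: "\<forall>p\<in>P. 0 \<le> \<alpha> p" and a1: "(\<Sum>p\<in>P. \<alpha> p) = 1"
        and sl: "(SUP p\<in>P. tau' E l q p (tau'_arg q j (\<alpha> p)) + ereal (l p i)) < ereal (L + \<delta>)"
        unfolding tau'_rec[OF d i2] Inf_less_iff P_def by blast
      have each: "\<alpha> p * X \<le> real (cnt E l p (L + \<delta> - l p i))" if pP: "p \<in> P" for p
      proof (cases "\<alpha> p = 0")
        case True then show ?thesis by simp
      next
        case False
        then have ap: "\<alpha> p > 0" using a0 pP by force
        have p1: "1 \<le> p" "p < i" using d pP by (auto simp: P_def dag_def)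
        define m where "m = \<lfloor>real_of_int j + log q (\<alpha> p)\<rfloor>"
        have "tau' E l q p (Some m) + ereal (l p i) \<le> (SUP p\<in>P. tau' E l q p (tau'_arg q j (\<alpha> p)) + ereal (l p i))"
          using pP ap by (intro SUP_upper2[OF pP]) (simp add: arg_pos m_def)
        then have "tau' E l q p (Some m) + ereal (l p i) < ereal (L + \<delta>)" using sl by (rule le_less_trans)
        then have "tau' E l q p (Some m) \<le> ereal (L + \<delta> - l p i)"
          by (cases "tau' E l q p (Some m)") auto
        then have ih: "q powi (m - int p + 1) \<le> real (cnt E l p (L + \<delta> - l p i))"
          using less.IH[OF p1(2) p1(1)] by blast
        have e1: "real_of_int j + log q (\<alpha> p) < real_of_int m + 1" unfolding m_def by linarith
        have e2: "real p + 1 \<le> real i" using p1 by simp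
        have "\<alpha> p * X = q powr (log q (\<alpha> p) + (real_of_int j - real i + 1))"
          using q ap by (simp add: X_def pw powr_add)
        also have "\<dots> \<le> q powr (real_of_int m - real p + 1)"
          using q e1 e2 by (intro powr_mono) auto
        also have "\<dots> = q powi (m - int p + 1)" using q by (simp add: pw)
        finally show ?thesis using ih by linarith
      qed
      have "X = (\<Sum>p\<in>P. \<alpha> p * X)" using a1 by (simp flip: sum_distrib_right)
      also have "\<dots> \<le> (\<Sum>p\<in>P. real (cnt E l p (L + \<delta> - l p i)))" using each by (rule sum_mono)
      also have "\<dots> = real (cnt E l i (L + \<delta>))"
        using cnt_decomp[OF d False, of l "L + \<delta>"] by (simp add: P_def)
      finally show "X \<le> real (cnt E l i (L + \<delta>))" .
    qed
  qed
qed



theorem lemma2: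
  fixes n :: nat and E :: "(nat \<times> nat) set" and l :: "nat \<Rightarrow> nat \<Rightarrow> real"
    and \<epsilon> q L :: real and k :: int and a :: nat
  assumes "1 \<le> n" and "dag n E" and "0 < \<epsilon>"
    and "q = (1 + \<epsilon>) powr (1 / (real n + 1))"
    and "tau' E l q n (Some k) \<le> ereal L" and "ereal L < tau' E l q n (Some (k + 1))"
    and "tau E l n (real a) \<le> ereal L" and "ereal L < tau E l n (real a + 1)"
  shows "inverse (1 + \<epsilon>) \<le> real a / q powi k \<and> real a / q powi k \<le> 1 + \<epsilon>"
proof -
  note d = assms(2)
  have "1 powr (1 / (real n + 1)) < (1 + \<epsilon>) powr (1 / (real n + 1))"
    using assms(3) by (intro powr_less_mono2) auto
  then have q: "1 < q" using assms(4) by simp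
  have qn: "q powr (real n + 1) = 1 + \<epsilon>"
    using assms(3,4) by (simp add: powr_powr)
  have a1: "real a \<le> real (cnt E l n L)" using tau_le[OF d assms(7)] .
  have a2: "\<not> real a + 1 \<le> real (cnt E l n L)"
    using le_tau[of "real a + 1" E l n L] assms(8) by auto
  have b1: "a \<le> cnt E l n L" using a1 by (simp only: of_nat_le_iff)
  have "\<not> real (Suc a) \<le> real (cnt E l n L)" using a2 by simp
  then have b2: "\<not> Suc a \<le> cnt E l n L" by (metis of_nat_le_iff)
  have ac: "real a = real (cnt E l n L)" using b1 b2 by simp
  have lo: "q powi (k - int n + 1) \<le> real a"
    using low[OF d q assms(1) assms(5)] ac by simp
  have hi: "real a < q powi (k + 1)"
    using up[OF d q assms(1), of "k+1" l L] assms(6) ac by force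
  have qk: "q powi k > 0" using q by simp
  have "inverse (1 + \<epsilon>) = q powr (- (real n + 1))"
    using qn q powr_minus[of q "real n + 1"] by simp
  also have "\<dots> \<le> q powr (real_of_int (k - int n + 1) - real_of_int k)"
    using q by (intro powr_mono) auto
  also have "\<dots> = q powi (k - int n + 1) / q powi k"
    using q by (simp only: powr_diff pw)
  also have "\<dots> \<le> real a / q powi k" using lo qk by (intro divide_right_mono) auto
  finally have L1: "inverse (1 + \<epsilon>) \<le> real a / q powi k" .
  have "real a / q powi k \<le> q powi (k + 1) / q powi k" using hi qk by (intro divide_right_mono) auto
  also have "\<dots> = q powr 1"
    using q by (simp add: pw flip: powr_diff)
  also have "\<dots> \<le> q powr (real n + 1)" using q by (intro powr_mono) auto
  finally have L2: "real a / q powi k \<le> 1 + \<epsilon>" using qn by simp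
  show ?thesis using L1 L2 by blast
qed

end
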